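(* There exists a copula $C\in\mathcal{C}^3_{\rm c}$ with $d_\infty(C,\psi(C))\ge\frac{3}{16}$; in particular $\sup_{C\in\mathcal{C}^3_{\rm c}}d_\infty(C,\psi(C))\ge\frac{3}{16}$.
   Context: $\mathbb{I}=[0,1]$, $\lambda$ Lebesgue measure; $d_\infty(C_1,C_2)=\max_{\mathbf{x}\in\mathbb{I}^3}|C_1(\mathbf{x})-C_2(\mathbf{x})|$. Points of $\mathbb{I}^3$ are written $(\mathbf{u},v)$, $\mathbf{u}=(u_1,u_2)$. For a three-dimensional copula $C$, $K_C$ is (a version of) the regular conditional distribution of $(U_1,U_2)$ given $U_3=v$, $(U_1,U_2,U_3)\sim C$; $F_{1|3}(u_1|t)=K_C(t,[0,u_1]\times\mathbb{I})$, $F_{2|3}(u_2|t)=K_C(t,\mathbb{I}\times[0,u_2])$. $\mathcal{C}^3_{\rm c}$ is the set of three-dimensional copulas for which $F_{1|3}(\cdot|t)$ and $F_{2|3}(\cdot|t)$ are continuous for $\lambda$-a.e. $t$; for such $C$, for a.e. $t$ the conditional copula $C^t_{12;3}$ is the unique bivariate copula with $K_C(t,[\mathbf{0},\mathbf{u}])=C^t_{12;3}(F_{1|3}(u_1|t),F_{2|3}(u_2|t))$. The partial copula is $C_p(\mathbf{s})=\int_{\mathbb{I}}C^t_{12;3}(\mathbf{s})\,d\lambda(t)$ and the partial vine copula $\psi(C)$ is defined by $\psi(C)(\mathbf{u},v)=\int_{[0,v]}C_p(F_{1|3}(u_1|t),F_{2|3}(u_2|t))\,d\lambda(t)$. *)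

theory Defs
  imports "HOL-Probability.Probability"
begin

abbreviation unit_I :: "real set" where "unit_I \<equiv> {0..1}"

definition copula2 :: "(real \<Rightarrow> real \<Rightarrow> real) \<Rightarrow> bool" where
  "copula2 C \<longleftrightarrow>
     (\<forall>u\<in>unit_I. C u 0 = 0 \<and> C 0 u = 0 \<and> C u 1 = u \<and> C 1 u = u) \<and>
     (\<forall>a1\<in>unit_I. \<forall>b1\<in>unit_I. \<forall>a2\<in>unit_I. \<forall>b2\<in>unit_I.
        a1 \<le> b1 \<longrightarrow> a2 \<le> b2 \<longrightarrow>
        C b1 b2 - C a1 b2 - C b1 a2 + C a1 a2 \<ge> 0)"

definition copula3 :: "(real \<Rightarrow> real \<Rightarrow> real \<Rightarrow> real) \<Rightarrow> bool" where
  "copula3 C \<longleftrightarrow>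
     (\<forall>x\<in>unit_I. \<forall>y\<in>unit_I. C 0 x y = 0 \<and> C x 0 y = 0 \<and> C x y 0 = 0) \<and>
     (\<forall>u\<in>unit_I. C u 1 1 = u \<and> C 1 u 1 = u \<and> C 1 1 u = u) \<and>
     (\<forall>a1\<in>unit_I. \<forall>b1\<in>unit_I. \<forall>a2\<in>unit_I. \<forall>b2\<in>unit_I. \<forall>a3\<in>unit_I. \<forall>b3\<in>unit_I.
        a1 \<le> b1 \<longrightarrow> a2 \<le> b2 \<longrightarrow> a3 \<le> b3 \<longrightarrow>
        C b1 b2 b3 - C a1 b2 b3 - C b1 a2 b3 - C b1 b2 a3
        + C a1 a2 b3 + C a1 b2 a3 + C b1 a2 a3 - C a1 a2 a3 \<ge> 0)"

text \<open>K is a version of the regular conditional distribution of (U1,U2) given U3 = t,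
  where (U1,U2,U3) ~ C: a Markov kernel from [0,1] to the Borel sets of R^2 with
  C(u1,u2,v) = int_{[0,v]} K(t,[0,u1]x[0,u2]) dt for all (u1,u2,v) in the unit cube
  (this determines the joint law of (U1,U2,U3) and hence K up to a null set).\<close>
definition cond_kernel :: "(real \<Rightarrow> real \<Rightarrow> real \<Rightarrow> real) \<Rightarrow> (real \<Rightarrow> (real \<times> real) measure) \<Rightarrow> bool" where
  "cond_kernel C K \<longleftrightarrow>
     K \<in> restrict_space lborel unit_I \<rightarrow>\<^sub>M prob_algebra (borel :: (real \<times> real) measure) \<and>
     (\<forall>u1\<in>unit_I. \<forall>u2\<in>unit_I. \<forall>v\<in>unit_I.
        (\<lambda>t. measure (K t) ({0..u1} \<times> {0..u2})) integrable_on {0..v} \<and>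
        C u1 u2 v = integral {0..v} (\<lambda>t. measure (K t) ({0..u1} \<times> {0..u2})))"

definition F13 :: "(real \<Rightarrow> (real \<times> real) measure) \<Rightarrow> real \<Rightarrow> real \<Rightarrow> real" where
  "F13 K t u1 = measure (K t) ({0..u1} \<times> unit_I)"

definition F23 :: "(real \<Rightarrow> (real \<times> real) measure) \<Rightarrow> real \<Rightarrow> real \<Rightarrow> real" where
  "F23 K t u2 = measure (K t) (unit_I \<times> {0..u2})"

definition copula3_c :: "(real \<Rightarrow> real \<Rightarrow> real \<Rightarrow> real) \<Rightarrow> bool" where
  "copula3_c C \<longleftrightarrow> copula3 C \<and>
     (\<exists>K. cond_kernel C K \<and>
        (AE t in lborel. t \<in> unit_I \<longrightarrow>
            continuous_on UNIV (F13 K t) \<and> continuous_on UNIV (F23 K t)))"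

definition cond_copulas :: "(real \<Rightarrow> (real \<times> real) measure) \<Rightarrow> (real \<Rightarrow> real \<Rightarrow> real \<Rightarrow> real) \<Rightarrow> bool" where
  "cond_copulas K D \<longleftrightarrow>
     (AE t in lborel. t \<in> unit_I \<longrightarrow> copula2 (D t) \<and>
        (\<forall>u1\<in>unit_I. \<forall>u2\<in>unit_I.
           measure (K t) ({0..u1} \<times> {0..u2}) = D t (F13 K t u1) (F23 K t u2)))"

definition partial_copula :: "(real \<Rightarrow> real \<Rightarrow> real \<Rightarrow> real) \<Rightarrow> real \<Rightarrow> real \<Rightarrow> real" where
  "partial_copula D s1 s2 = integral unit_I (\<lambda>t. D t s1 s2)"

definition psi :: "(real \<Rightarrow> (real \<times> real) measure) \<Rightarrow> (real \<Rightarrow> real \<Rightarrow> real \<Rightarrow> real) \<Rightarrow> real \<Rightarrow> real \<Rightarrow> real \<Rightarrow> real" where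
  "psi K D u1 u2 v = integral {0..v} (\<lambda>t. partial_copula D (F13 K t u1) (F23 K t u2))"

definition d_inf :: "(real \<Rightarrow> real \<Rightarrow> real \<Rightarrow> real) \<Rightarrow> (real \<Rightarrow> real \<Rightarrow> real \<Rightarrow> real) \<Rightarrow> real" where
  "d_inf C1 C2 = (SUP x \<in> unit_I \<times> unit_I \<times> unit_I.
                    \<bar>C1 (fst x) (fst (snd x)) (snd (snd x)) - C2 (fst x) (fst (snd x)) (snd (snd x))\<bar>)"

end

theory Submission
  imports Defs
begin


definition clamp :: "real \<Rightarrow> real" where "clamp z = max 0 (min 1 z)"

lemma clamp_ge0[simp]: "0 \<le> clamp z" and clamp_le1[simp]: "clamp z \<le> 1"
  unfolding clamp_def by auto

lemma clamp_mono: "x \<le> y \<Longrightarrow> clamp x \<le> clamp y"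
  unfolding clamp_def by auto

lemma clamp_le0: "z \<le> 0 \<Longrightarrow> clamp z = 0" and clamp_ge1: "1 \<le> z \<Longrightarrow> clamp z = 1"
  unfolding clamp_def by auto

lemma clamp_id: "0 \<le> z \<Longrightarrow> z \<le> 1 \<Longrightarrow> clamp z = z"
  unfolding clamp_def by auto

lemma clamp_sum4: "0 \<le> z \<Longrightarrow> z \<le> 4 \<Longrightarrow> clamp z + clamp (z-1) + clamp (z-2) + clamp (z-3) = z"
  unfolding clamp_def by (simp add: max_def min_def)

lemma clamp_sum8: "0 \<le> z \<Longrightarrow> z \<le> 8 \<Longrightarrow> clamp z + clamp (z-1) + clamp (z-2) + clamp (z-3)
   + clamp (z-4) + clamp (z-5) + clamp (z-6) + clamp (z-7) = z"
  unfolding clamp_def by (simp add: max_def min_def)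

lemma clamp_sorted:
  fixes z :: real
  assumes "a0 + 1 \<le> a1" "a1 + 1 \<le> a2" "a2 + 1 \<le> a3"
  defines "S \<equiv> clamp (z-a0) + clamp (z-a1) + clamp (z-a2) + clamp (z-a3)"
  shows "clamp S = clamp (z-a0)" "clamp (S-1) = clamp (z-a1)" "clamp (S-2) = clamp (z-a2)" "clamp (S-3) = clamp (z-a3)"
  using assms unfolding clamp_def by (simp_all add: max_def min_def)



definition cellbox :: "real \<Rightarrow> real \<Rightarrow> (real\<times>real) set" where
  "cellbox c r = {c/8..(c+1)/8} \<times> {r/8..(r+1)/8}"

definition mu :: "(nat \<Rightarrow> real) \<Rightarrow> (nat \<Rightarrow> real) \<Rightarrow> (real\<times>real) measure" where
  "mu cs rs = density lborel (\<lambda>p. \<Sum>k<4. 16 * indicator (cellbox (cs k) (rs k)) p)"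

lemma cellbox_borel[measurable]: "cellbox c r \<in> sets borel"
  unfolding cellbox_def by (intro borel_closed closed_Times) auto

lemma dens_meas: "(\<lambda>p. \<Sum>k<4. 16 * indicator (cellbox (cs k) (rs k)) p :: ennreal) \<in> borel_measurable lborel"
  by measurable

lemma sets_mu[simp]: "sets (mu cs rs) = sets borel" and space_mu[simp]: "space (mu cs rs) = UNIV"
  unfolding mu_def by auto

lemma emeasure_lborel_times:
  fixes A B :: "real set"
  assumes "A \<in> sets borel" "B \<in> sets borel"
  shows "emeasure (lborel :: (real\<times>real) measure) (A \<times> B) = emeasure lborel A * emeasure lborel B"
proof -
  have "emeasure (lborel :: (real\<times>real) measure) (A \<times> B) = emeasure (lborel \<Otimes>\<^sub>M lborel) (A \<times> B)"
    by (simp add: lborel_prod)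
  also have "\<dots> = emeasure lborel A * emeasure lborel B"
    using assms by (intro lborel.emeasure_pair_measure_Times) auto
  finally show ?thesis .
qed

lemma mu_rect:
  fixes A B :: "real set"
  assumes A: "A \<in> sets borel" and B: "B \<in> sets borel"
  shows "emeasure (mu cs rs) (A \<times> B) = (\<Sum>k<4. 16 * emeasure lborel ({cs k/8..(cs k+1)/8} \<inter> A)
              * emeasure lborel ({rs k/8..(rs k+1)/8} \<inter> B))"
proof -
  have "A \<times> B \<in> sets (borel \<Otimes>\<^sub>M borel)" using A B by (rule pair_measureI)
  then have AB: "A \<times> B \<in> sets (borel :: (real\<times>real) measure)" by (metis borel_prod)
  have "emeasure (mu cs rs) (A \<times> B) = (\<integral>\<^sup>+ p. (\<Sum>k<4. 16 * indicator (cellbox (cs k) (rs k)) p) * indicator (A\<times>B) p \<partial>lborel)"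
    unfolding mu_def using AB by (subst emeasure_density[OF dens_meas]) auto
  also have "\<dots> = (\<integral>\<^sup>+ p. (\<Sum>k<4. 16 * indicator (cellbox (cs k) (rs k) \<inter> (A\<times>B)) p) \<partial>lborel)"
    by (intro nn_integral_cong) (auto simp: sum_distrib_right split: split_indicator)
  also have "\<dots> = (\<Sum>k<4. (\<integral>\<^sup>+ p. 16 * indicator (cellbox (cs k) (rs k) \<inter> (A\<times>B)) p \<partial>lborel))"
    using AB by (intro nn_integral_sum borel_measurable_times_ennreal borel_measurable_const borel_measurable_indicator) (simp add: sets.Int cellbox_borel)
  also have "\<dots> = (\<Sum>k<4. 16 * emeasure lborel (cellbox (cs k) (rs k) \<inter> (A\<times>B)))"
    using AB by (intro sum.cong refl nn_integral_cmult_indicator) (simp add: sets.Int cellbox_borel)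
  also have "\<dots> = (\<Sum>k<4. 16 * emeasure lborel ({cs k/8..(cs k+1)/8} \<inter> A)
              * emeasure lborel ({rs k/8..(rs k+1)/8} \<inter> B))"
  proof (intro sum.cong refl)
    fix k
    have "cellbox (cs k) (rs k) \<inter> (A\<times>B) = ({cs k/8..(cs k+1)/8} \<inter> A) \<times> ({rs k/8..(rs k+1)/8} \<inter> B)"
      unfolding cellbox_def by auto
    then show "16 * emeasure lborel (cellbox (cs k) (rs k) \<inter> (A\<times>B)) = 16 * emeasure lborel ({cs k/8..(cs k+1)/8} \<inter> A)
              * emeasure lborel ({rs k/8..(rs k+1)/8} \<inter> B)"
      using A B by (simp add: emeasure_lborel_times mult.assoc)
  qed
  finally show ?thesis .
qed

lemma emeasure_cell_Icc:
  assumes "0 \<le> c"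
  shows "emeasure lborel ({c/8..(c+1)/8} \<inter> {0..u}) = ennreal (clamp (8 * u - c) / 8)"
proof (cases "c/8 \<le> u")
  case True
  have "{c/8..(c+1)/8} \<inter> {0..u} = {c/8..min ((c+1)/8) u}" using assms by auto
  moreover have "min ((c+1)/8) u - c/8 = clamp (8 * u - c) / 8"
    using True unfolding clamp_def by (auto simp: min_def max_def field_simps)
  ultimately show ?thesis using True by simp
next
  case False
  then have "{c/8..(c+1)/8} \<inter> {0..u} = {}" by auto
  moreover have "clamp (8 * u - c) = 0" using False by (intro clamp_le0) auto
  ultimately show ?thesis by simp
qed

lemma emeasure_cell_UNIV: "emeasure lborel ({c/8..(c+1)/8::real} \<inter> UNIV) = ennreal (1/8)"
proof -
  have "(c+1)/8 - c/8 = (1/8::real)" by (simp add: field_simps)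
  then show ?thesis by simp
qed

lemma ennreal_16ab: "0 \<le> a \<Longrightarrow> 0 \<le> b \<Longrightarrow> (16::ennreal) * ennreal (a/8) * ennreal (b/8) = ennreal (1/4 * a * b)"
proof -
  assume "0 \<le> a" "0 \<le> b"
  then have "ennreal (16 * (a/8) * (b/8)) = ennreal (16 * (a/8)) * ennreal (b/8)"
    by (intro ennreal_mult) auto
  also have "ennreal (16 * (a/8)) = ennreal 16 * ennreal (a/8)"
    using \<open>0 \<le> a\<close> by (intro ennreal_mult) auto
  finally have "ennreal 16 * ennreal (a/8) * ennreal (b/8) = ennreal (1/4 * a * b)" by simp
  then show ?thesis by simp
qed

lemma ennreal_16: "(16::ennreal) * ennreal (1/8) * ennreal (1/8) = ennreal (1/4)"
  using ennreal_16ab[of 1 1] by simp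

lemma prob_space_mu: "prob_space (mu cs rs)"
proof (rule prob_spaceI)
  have "emeasure (mu cs rs) (space (mu cs rs)) = emeasure (mu cs rs) (UNIV \<times> UNIV)" by simp
  also have "\<dots> = (\<Sum>k<(4::nat). 16 * ennreal (1/8) * ennreal (1/8))"
    by (subst mu_rect) (simp_all only: emeasure_cell_UNIV sets_lborel UNIV_I, simp_all)
  also have "\<dots> = (\<Sum>k<(4::nat). ennreal (1/4))"
    by (simp only: ennreal_16)
  also have "\<dots> = ennreal (\<Sum>k<(4::nat). 1/4)"
    by (rule sum_ennreal) simp
  also have "\<dots> = 1" by simp
  finally show "emeasure (mu cs rs) (space (mu cs rs)) = 1" .
qed

lemma mu_rect_measure:
  assumes "\<And>k. k < 4 \<Longrightarrow> 0 \<le> cs k" "\<And>k. k < 4 \<Longrightarrow> 0 \<le> rs k"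
  shows "measure (mu cs rs) ({0..u1} \<times> {0..u2}) = (\<Sum>k<4. 1/4 * clamp (8 * u1 - cs k) * clamp (8 * u2 - rs k))"
proof -
  have "emeasure (mu cs rs) ({0..u1} \<times> {0..u2}) = (\<Sum>k<4. 16 * emeasure lborel ({cs k/8..(cs k+1)/8} \<inter> {0..u1})
              * emeasure lborel ({rs k/8..(rs k+1)/8} \<inter> {0..u2}))"
    by (rule mu_rect) auto
  also have "\<dots> = (\<Sum>k<4. 16 * ennreal (clamp (8 * u1 - cs k) / 8) * ennreal (clamp (8 * u2 - rs k) / 8))"
  proof (intro sum.cong refl)
    fix k :: nat assume "k \<in> {..<4}"
    then have "0 \<le> cs k" "0 \<le> rs k" using assms by auto
    then show "16 * emeasure lborel ({cs k/8..(cs k+1)/8} \<inter> {0..u1}) * emeasure lborel ({rs k/8..(rs k+1)/8} \<inter> {0..u2})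
      = 16 * ennreal (clamp (8 * u1 - cs k) / 8) * ennreal (clamp (8 * u2 - rs k) / 8)"
      by (simp only: emeasure_cell_Icc)
  qed
  also have "\<dots> = (\<Sum>k<4. ennreal (1/4 * clamp (8 * u1 - cs k) * clamp (8 * u2 - rs k)))"
    by (intro sum.cong refl ennreal_16ab) auto
  also have "\<dots> = ennreal (\<Sum>k<4. 1/4 * clamp (8 * u1 - cs k) * clamp (8 * u2 - rs k))"
    by (rule sum_ennreal) auto
  finally show ?thesis unfolding measure_def by (simp add: sum_nonneg)
qed



definition colsL :: "real list list" where "colsL = [[0,4,5,6],[1,2,4,7],[1,3,5,7],[0,2,3,6]]"
definition rowsL :: "real list list" where "rowsL = [[0,1,4,5],[2,4,6,7],[0,2,3,6],[1,3,5,7]]"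
definition permL :: "nat list list" where "permL = [[1,3,2,0],[3,0,2,1],[2,1,3,0],[3,1,0,2]]"
definition ca :: "nat \<Rightarrow> nat \<Rightarrow> real" where "ca j k = colsL!j!k"
definition rb :: "nat \<Rightarrow> nat \<Rightarrow> real" where "rb j k = rowsL!j!k"
definition pm :: "nat \<Rightarrow> nat \<Rightarrow> nat" where "pm j k = permL!j!k"
definition rs :: "nat \<Rightarrow> nat \<Rightarrow> real" where "rs j k = rb j (pm j k)"

definition mm :: "nat \<Rightarrow> real \<Rightarrow> real \<Rightarrow> real" where
  "mm j u1 u2 = (\<Sum>k<4. 1/4 * clamp (8 * u1 - ca j k) * clamp (8 * u2 - rs j k))"

definition Dcop :: "(nat \<Rightarrow> nat) \<Rightarrow> real \<Rightarrow> real \<Rightarrow> real" where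
  "Dcop p x y = (\<Sum>k<4. 1/4 * clamp (4 * x - real k) * clamp (4 * y - real (p k)))"

lemma less4_cases: "(k::nat) < 4 \<Longrightarrow> k = 0 \<or> k = 1 \<or> k = 2 \<or> k = 3" by auto

lemma sum4: "(\<Sum>k<(4::nat). f k) = f 0 + f 1 + f 2 + (f 3 :: real)"
  by (simp add: lessThan_nat_numeral)

lemma data_bounds:
  assumes "j < 4" "k < 4"
  shows "0 \<le> ca j k" "ca j k \<le> 7" "0 \<le> rb j k" "rb j k \<le> 7" "pm j k < 4"
  using less4_cases[OF assms(1)] less4_cases[OF assms(2)]
  by (auto simp: ca_def rb_def pm_def colsL_def rowsL_def permL_def)

lemma rs_bounds: "j < 4 \<Longrightarrow> k < 4 \<Longrightarrow> 0 \<le> rs j k \<and> rs j k \<le> 7"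
  unfolding rs_def using data_bounds by auto

lemma data_sorted:
  assumes "j < 4"
  shows "ca j 0 + 1 \<le> ca j 1" "ca j 1 + 1 \<le> ca j 2" "ca j 2 + 1 \<le> ca j 3"
        "rb j 0 + 1 \<le> rb j 1" "rb j 1 + 1 \<le> rb j 2" "rb j 2 + 1 \<le> rb j 3"
  using less4_cases[OF assms(1)]
  by (auto simp: ca_def rb_def colsL_def rowsL_def)

lemma pm_reindex:
  assumes "j < 4"
  shows "(\<Sum>k<4. f (pm j k)) = (\<Sum>k<4. (f k :: real))"
  using less4_cases[OF assms(1)]
  by (auto simp: sum4 pm_def permL_def)

lemma clamp_sorted4:
  fixes a :: "nat \<Rightarrow> real"
  assumes "a 0 + 1 \<le> a 1" "a 1 + 1 \<le> a 2" "a 2 + 1 \<le> a 3" "k < 4"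
  shows "clamp ((\<Sum>i<4. clamp (z - a i)) - real k) = clamp (z - a k)"
  using clamp_sorted[OF assms(1-3), of z] less4_cases[OF assms(4)]
  by (auto simp: sum4)

lemma Dcop_gen:
  fixes a b :: "nat \<Rightarrow> real"
  assumes "a 0 + 1 \<le> a 1" "a 1 + 1 \<le> a 2" "a 2 + 1 \<le> a 3"
    "b 0 + 1 \<le> b 1" "b 1 + 1 \<le> b 2" "b 2 + 1 \<le> b 3" "\<And>k. k < 4 \<Longrightarrow> p k < 4"
  shows "Dcop p (1/4 * (\<Sum>i<4. clamp (z1 - a i))) (1/4 * (\<Sum>i<4. clamp (z2 - b i)))
     = (\<Sum>k<4. 1/4 * clamp (z1 - a k) * clamp (z2 - b (p k)))"
  unfolding Dcop_def
proof (intro sum.cong refl)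
  fix k :: nat assume k: "k \<in> {..<4}"
  have "clamp (4 * (1/4 * (\<Sum>i<4. clamp (z1 - a i))) - real k) = clamp (z1 - a k)"
    using clamp_sorted4[OF assms(1-3), of k z1] k by simp
  moreover have "clamp (4 * (1/4 * (\<Sum>i<4. clamp (z2 - b i))) - real (p k)) = clamp (z2 - b (p k))"
    using clamp_sorted4[OF assms(4-6), of "p k" z2] k assms(7) by simp
  ultimately show "1/4 * clamp (4 * (1/4 * (\<Sum>i<4. clamp (z1 - a i))) - real k) *
      clamp (4 * (1/4 * (\<Sum>i<4. clamp (z2 - b i))) - real (p k)) =
      1/4 * clamp (z1 - a k) * clamp (z2 - b (p k))" by simp
qed

lemma mm_F1: "j < 4 \<Longrightarrow> mm j u 1 = 1/4 * (\<Sum>i<4. clamp (8 * u - ca j i))"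
  unfolding mm_def sum_distrib_left
  by (intro sum.cong refl) (auto simp: clamp_ge1 dest: rs_bounds)

lemma mm_F2: "j < 4 \<Longrightarrow> mm j 1 u = 1/4 * (\<Sum>i<4. clamp (8 * u - rb j i))"
proof -
  assume j: "j < 4"
  have "mm j 1 u = 1/4 * (\<Sum>i<4. clamp (8 * u - rb j (pm j i)))"
    unfolding mm_def sum_distrib_left rs_def
    by (intro sum.cong refl) (auto simp: clamp_ge1 dest: data_bounds(2)[OF j])
  also have "\<dots> = 1/4 * (\<Sum>i<4. clamp (8 * u - rb j i))"
    using pm_reindex[OF j, of "\<lambda>i. clamp (8 * u - rb j i)"] by simp
  finally show ?thesis .
qed

lemma mm_Dcop: "j < 4 \<Longrightarrow> mm j u1 u2 = Dcop (pm j) (mm j u1 1) (mm j 1 u2)"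
  unfolding mm_F1 mm_F2
  by (subst Dcop_gen[OF data_sorted]) (auto simp: mm_def rs_def data_bounds)



lemma vol2_sum:
  fixes f g :: "'i \<Rightarrow> real \<Rightarrow> real"
  assumes w: "\<And>i. i \<in> S \<Longrightarrow> 0 \<le> w i" and f: "\<And>i. mono (f i)" and g: "\<And>i. mono (g i)"
    and ab: "a1 \<le> b1" "a2 \<le> b2"
  shows "(\<Sum>i\<in>S. w i * f i b1 * g i b2) - (\<Sum>i\<in>S. w i * f i a1 * g i b2)
       - (\<Sum>i\<in>S. w i * f i b1 * g i a2) + (\<Sum>i\<in>S. w i * f i a1 * g i a2) \<ge> 0"
proof -
  have "(\<Sum>i\<in>S. w i * f i b1 * g i b2) - (\<Sum>i\<in>S. w i * f i a1 * g i b2)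
       - (\<Sum>i\<in>S. w i * f i b1 * g i a2) + (\<Sum>i\<in>S. w i * f i a1 * g i a2)
      = (\<Sum>i\<in>S. w i * (f i b1 - f i a1) * (g i b2 - g i a2))"
    by (simp add: algebra_simps sum_subtractf sum.distrib)
  also have "\<dots> \<ge> 0"
    using w f g ab by (intro sum_nonneg mult_nonneg_nonneg) (auto simp: mono_def)
  finally show ?thesis .
qed

lemma vol3_sum:
  fixes h :: "'i \<Rightarrow> real \<Rightarrow> real" and H :: "'i \<Rightarrow> real \<Rightarrow> real \<Rightarrow> real"
  assumes h: "\<And>i. i \<in> S \<Longrightarrow> mono (h i)"
    and H: "\<And>i. i \<in> S \<Longrightarrow> H i xb yb - H i xa yb - H i xb ya + H i xa ya \<ge> 0" and ab: "za \<le> zb"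
  shows "(\<Sum>i\<in>S. h i zb * H i xb yb) - (\<Sum>i\<in>S. h i zb * H i xa yb) - (\<Sum>i\<in>S. h i zb * H i xb ya)
    - (\<Sum>i\<in>S. h i za * H i xb yb) + (\<Sum>i\<in>S. h i zb * H i xa ya) + (\<Sum>i\<in>S. h i za * H i xa yb)
    + (\<Sum>i\<in>S. h i za * H i xb ya) - (\<Sum>i\<in>S. h i za * H i xa ya) \<ge> 0"
proof -
  have "(\<Sum>i\<in>S. h i zb * H i xb yb) - (\<Sum>i\<in>S. h i zb * H i xa yb) - (\<Sum>i\<in>S. h i zb * H i xb ya)
    - (\<Sum>i\<in>S. h i za * H i xb yb) + (\<Sum>i\<in>S. h i zb * H i xa ya) + (\<Sum>i\<in>S. h i za * H i xa yb)
    + (\<Sum>i\<in>S. h i za * H i xb ya) - (\<Sum>i\<in>S. h i za * H i xa ya)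
    = (\<Sum>i\<in>S. (h i zb - h i za) * (H i xb yb - H i xa yb - H i xb ya + H i xa ya))"
    by (simp add: algebra_simps sum_subtractf sum.distrib)
  also have "\<dots> \<ge> 0"
    using h H ab by (intro sum_nonneg mult_nonneg_nonneg) (auto simp: mono_def)
  finally show ?thesis .
qed

lemma mono_clamp_lin: "0 \<le> c \<Longrightarrow> mono (\<lambda>x. clamp (c * x - d))"
  by (auto simp: mono_def intro!: clamp_mono mult_left_mono)

lemma Dcop_copula2:
  assumes p: "\<And>k. k < 4 \<Longrightarrow> p k < 4" and re: "\<And>f. (\<Sum>k<4. f (p k)) = (\<Sum>k<4. (f k :: real))"
  shows "copula2 (Dcop p)"
  unfolding copula2_def
proof (intro conjI ballI impI)
  fix u :: real assume u: "u \<in> unit_I"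
  show "Dcop p u 0 = 0" unfolding Dcop_def by (intro sum.neutral) (auto simp: clamp_le0)
  show "Dcop p 0 u = 0" unfolding Dcop_def by (intro sum.neutral) (auto simp: clamp_le0)
  have "Dcop p u 1 = (\<Sum>k<4. 1/4 * clamp (4 * u - real k))"
    unfolding Dcop_def
  proof (intro sum.cong refl)
    fix k assume "k \<in> {..<(4::nat)}"
    then have "p k \<le> 3" using p[of k] by auto
    then have "real (p k) \<le> 3" by simp
    then show "1/4 * clamp (4 * u - real k) * clamp (4 * 1 - real (p k)) = 1/4 * clamp (4 * u - real k)"
      by (simp add: clamp_ge1)
  qed
  also have "\<dots> = u" using clamp_sum4[of "4 * u"] u by (simp add: sum4)
  finally show "Dcop p u 1 = u" .
  have "Dcop p 1 u = (\<Sum>k<4. 1/4 * clamp (4 * u - real (p k)))"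
    unfolding Dcop_def by (intro sum.cong refl) (auto simp: clamp_ge1)
  also have "\<dots> = (\<Sum>k<4. 1/4 * clamp (4 * u - real k))" by (rule re)
  also have "\<dots> = u" using clamp_sum4[of "4 * u"] u by (simp add: sum4)
  finally show "Dcop p 1 u = u" .
next
  fix a1 b1 a2 b2 :: real assume "a1 \<le> b1" "a2 \<le> b2"
  then show "0 \<le> Dcop p b1 b2 - Dcop p a1 b2 - Dcop p b1 a2 + Dcop p a1 a2"
    unfolding Dcop_def
    using vol2_sum[of "{..<4::nat}" "\<lambda>_. 1/4" "\<lambda>k x. clamp (4 * x - real k)" "\<lambda>k y. clamp (4 * y - real (p k))"]
    by (simp add: mono_clamp_lin)
qed

lemma Dcop_pm_copula2: "j < 4 \<Longrightarrow> copula2 (Dcop (pm j))"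
  by (rule Dcop_copula2) (auto simp: data_bounds pm_reindex)

definition C0 :: "real \<Rightarrow> real \<Rightarrow> real \<Rightarrow> real" where
  "C0 u1 u2 v = (\<Sum>j<4. clamp (4 * v - real j) / 4 * mm j u1 u2)"

lemma mm_vol2: "a1 \<le> b1 \<Longrightarrow> a2 \<le> b2 \<Longrightarrow> mm j b1 b2 - mm j a1 b2 - mm j b1 a2 + mm j a1 a2 \<ge> 0"
  unfolding mm_def
  using vol2_sum[of "{..<4::nat}" "\<lambda>_. 1/4" "\<lambda>k x. clamp (8 * x - ca j k)" "\<lambda>k y. clamp (8 * y - rs j k)"]
  by (simp add: mono_clamp_lin)

lemma mm_zero1: "j < 4 \<Longrightarrow> mm j 0 x = 0"
  unfolding mm_def by (intro sum.neutral) (auto simp: clamp_le0 data_bounds)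

lemma mm_zero2: "j < 4 \<Longrightarrow> mm j x 0 = 0"
  unfolding mm_def by (intro sum.neutral) (auto simp: clamp_le0 rs_bounds)

lemma mm_11: "j < 4 \<Longrightarrow> mm j 1 1 = 1"
  by (simp add: mm_F1 sum4 clamp_ge1 data_bounds)

lemma C0_copula3: "copula3 C0"
  unfolding copula3_def
proof (intro conjI ballI impI)
  fix x y :: real
  show "C0 0 x y = 0" unfolding C0_def by (intro sum.neutral) (auto simp: mm_zero1)
  show "C0 x 0 y = 0" unfolding C0_def by (intro sum.neutral) (auto simp: mm_zero2)
  show "C0 x y 0 = 0" unfolding C0_def by (intro sum.neutral) (auto simp: clamp_le0)
next
  fix u :: real assume u: "u \<in> unit_I"
  have "C0 1 1 u = (\<Sum>j<4. clamp (4 * u - real j) / 4)"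
    unfolding C0_def by (intro sum.cong refl) (auto simp: mm_11)
  also have "\<dots> = u" using clamp_sum4[of "4 * u"] u by (simp add: sum4)
  finally show "C0 1 1 u = u" .
  have "C0 u 1 1 = (\<Sum>j<4. 1/4 * mm j u 1)"
    unfolding C0_def by (intro sum.cong refl) (auto simp: clamp_ge1)
  also have "\<dots> = 1/8 * (clamp (8 * u) + clamp (8 * u - 1) + clamp (8 * u - 2) + clamp (8 * u - 3) + clamp (8 * u - 4) + clamp (8 * u - 5) + clamp (8 * u - 6) + clamp (8 * u - 7))"
    by (simp add: sum4 mm_F1 ca_def colsL_def field_simps)
  also have "\<dots> = u" using clamp_sum8[of "8 * u"] u by simp
  finally show "C0 u 1 1 = u" .
  have "C0 1 u 1 = (\<Sum>j<4. 1/4 * mm j 1 u)"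
    unfolding C0_def by (intro sum.cong refl) (auto simp: clamp_ge1)
  also have "\<dots> = 1/8 * (clamp (8 * u) + clamp (8 * u - 1) + clamp (8 * u - 2) + clamp (8 * u - 3) + clamp (8 * u - 4) + clamp (8 * u - 5) + clamp (8 * u - 6) + clamp (8 * u - 7))"
    by (simp add: sum4 mm_F2 rb_def rowsL_def field_simps)
  also have "\<dots> = u" using clamp_sum8[of "8 * u"] u by simp
  finally show "C0 1 u 1 = u" .
next
  fix a1 b1 a2 b2 a3 b3 :: real
  assume "a1 \<le> b1" "a2 \<le> b2" "a3 \<le> b3"
  then show "0 \<le> C0 b1 b2 b3 - C0 a1 b2 b3 - C0 b1 a2 b3 - C0 b1 b2 a3 + C0 a1 a2 b3 + C0 a1 b2 a3 + C0 b1 a2 a3 - C0 a1 a2 a3"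
    unfolding C0_def
    using vol3_sum[where S="{..<4::nat}" and h="\<lambda>j v. clamp (4 * v - real j) / 4" and H="\<lambda>j. mm j" and xa=a1 and xb=b1 and ya=a2 and yb=b2 and za=a3 and zb=b3]
    by (auto simp: mm_vol2 mono_def divide_right_mono clamp_mono)
qed



definition step4 :: "'a \<Rightarrow> 'a \<Rightarrow> 'a \<Rightarrow> 'a \<Rightarrow> real \<Rightarrow> 'a" where
  "step4 x0 x1 x2 x3 t = (if t < 1/4 then x0 else if t < 1/2 then x1 else if t < 3/4 then x2 else x3)"

lemma step4_comp: "f (step4 x0 x1 x2 x3 t) = step4 (f x0) (f x1) (f x2) (f x3) t"
  unfolding step4_def by auto

definition grp :: "real \<Rightarrow> nat" where "grp t = step4 0 1 2 3 t"

lemma grp_less: "grp t < 4" unfolding grp_def step4_def by auto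

lemma comp_grp: "f (grp t) = step4 (f 0) (f 1) (f 2) (f 3) t"
  unfolding grp_def step4_def by auto

definition K0 :: "real \<Rightarrow> (real\<times>real) measure" where
  "K0 t = mu (ca (grp t)) (rs (grp t))"

definition D0 :: "real \<Rightarrow> real \<Rightarrow> real \<Rightarrow> real" where
  "D0 t = Dcop (pm (grp t))"

lemma K0_rect: "measure (K0 t) ({0..u1} \<times> {0..u2}) = mm (grp t) u1 u2"
  unfolding K0_def mm_def
  by (rule mu_rect_measure) (auto simp: grp_less data_bounds rs_bounds)

lemma K0_meas: "K0 \<in> restrict_space lborel unit_I \<rightarrow>\<^sub>M prob_algebra borel"
proof -
  have sp: "mu (ca j) (rs j) \<in> space (prob_algebra borel)" for j
    by (simp add: space_prob_algebra prob_space_mu)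
  have "K0 = (\<lambda>t. step4 (mu (ca 0) (rs 0)) (mu (ca 1) (rs 1)) (mu (ca 2) (rs 2)) (mu (ca 3) (rs 3)) t)"
    unfolding K0_def by (intro ext) (rule comp_grp[where f="\<lambda>j. mu (ca j) (rs j)"])
  also have "\<dots> \<in> restrict_space lborel unit_I \<rightarrow>\<^sub>M prob_algebra borel"
    unfolding step4_def
    by (intro measurable_If measurable_const sp) (auto simp: sets_restrict_space_iff)
  finally show ?thesis .
qed

lemma piece_has_integral:
  fixes a b v c :: real
  assumes "0 \<le> a" "a \<le> b" "0 \<le> v"
  shows "((\<lambda>t. if t \<in> {a..b} then c else 0) has_integral (c * max 0 (min b v - a))) {0..v}"
  unfolding has_integral_restrict_Int
proof (cases "a \<le> min b v")
  case True
  have "{a..b} \<inter> {0..v} = {a..min b v}" using assms by auto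
  then show "((\<lambda>t. c) has_integral (c * max 0 (min b v - a))) ({a..b} \<inter> {0..v})"
    using has_integral_const_real[of c a "min b v"] True by (simp add: mult.commute)
next
  case False
  then have e: "{a..b} \<inter> {0..v} = {}" using assms by auto
  have "c * max 0 (min b v - a) = 0" using False assms by (auto simp: max_def min_def)
  then show "((\<lambda>t. c) has_integral (c * max 0 (min b v - a))) ({a..b} \<inter> {0..v})"
    unfolding e by simp
qed

lemma maxmin_clamp: "0 \<le> v \<Longrightarrow> max 0 (min ((j+1)/4) v - j/4) = clamp (4 * v - j) / (4::real)"
  unfolding clamp_def by (auto simp: min_def max_def field_simps)

lemma step4_has_integral:
  fixes x0 x1 x2 x3 v :: real
  assumes v: "0 \<le> v" "v \<le> 1"
  shows "(step4 x0 x1 x2 x3 has_integral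
     (x0 * clamp (4 * v) / 4 + x1 * clamp (4 * v-1) / 4 + x2 * clamp (4 * v-2) / 4 + x3 * clamp (4 * v-3) / 4)) {0..v}"
proof -
  let ?p = "\<lambda>a b c t. if t \<in> {a..b} then c else (0::real)"
  have e0: "x0 * clamp (4 * v) / 4 = x0 * max 0 (min (1/4) v - 0)"
    using v unfolding clamp_def by (auto simp: min_def max_def field_simps)
  have e1: "x1 * clamp (4 * v - 1) / 4 = x1 * max 0 (min (1/2) v - 1/4)"
    using v unfolding clamp_def by (auto simp: min_def max_def field_simps)
  have e2: "x2 * clamp (4 * v - 2) / 4 = x2 * max 0 (min (3/4) v - 1/2)"
    using v unfolding clamp_def by (auto simp: min_def max_def field_simps)
  have e3: "x3 * clamp (4 * v - 3) / 4 = x3 * max 0 (min 1 v - 3/4)"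
    using v unfolding clamp_def by (auto simp: min_def max_def field_simps)
  have i0: "(?p 0 (1/4) x0 has_integral (x0 * clamp (4 * v) / 4)) {0..v}"
    unfolding e0 by (rule piece_has_integral) (use v in auto)
  have i1: "(?p (1/4) (1/2) x1 has_integral (x1 * clamp (4 * v - 1) / 4)) {0..v}"
    unfolding e1 by (rule piece_has_integral) (use v in auto)
  have i2: "(?p (1/2) (3/4) x2 has_integral (x2 * clamp (4 * v - 2) / 4)) {0..v}"
    unfolding e2 by (rule piece_has_integral) (use v in auto)
  have i3: "(?p (3/4) 1 x3 has_integral (x3 * clamp (4 * v - 3) / 4)) {0..v}"
    unfolding e3 by (rule piece_has_integral) (use v in auto)
  have "((\<lambda>t. ?p 0 (1/4) x0 t + ?p (1/4) (1/2) x1 t + ?p (1/2) (3/4) x2 t + ?p (3/4) 1 x3 t) has_integral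
     (x0 * clamp (4 * v) / 4 + x1 * clamp (4 * v-1) / 4 + x2 * clamp (4 * v-2) / 4 + x3 * clamp (4 * v-3) / 4)) {0..v}"
    by (intro has_integral_add i0 i1 i2 i3)
  then show ?thesis
    by (rule has_integral_spike_finite[where S="{1/4,1/2,3/4}", rotated 2]) (use v in \<open>auto simp: step4_def\<close>)
qed

lemma C0_step: "C0 u1 u2 v = mm 0 u1 u2 * clamp (4 * v) / 4 + mm 1 u1 u2 * clamp (4 * v-1) / 4
   + mm 2 u1 u2 * clamp (4 * v-2) / 4 + mm 3 u1 u2 * clamp (4 * v-3) / 4"
  unfolding C0_def sum4 by (simp add: field_simps)

lemma K0_rect_step: "(\<lambda>t. measure (K0 t) ({0..u1} \<times> {0..u2})) = step4 (mm 0 u1 u2) (mm 1 u1 u2) (mm 2 u1 u2) (mm 3 u1 u2)"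
  unfolding K0_rect by (intro ext) (rule comp_grp[where f="\<lambda>j. mm j u1 u2"])

lemma K0_kernel: "cond_kernel C0 K0"
  unfolding cond_kernel_def
proof (intro conjI ballI K0_meas)
  fix u1 u2 v :: real assume "v \<in> unit_I"
  then have v: "0 \<le> v" "v \<le> 1" by auto
  note hi = step4_has_integral[OF v, of "mm 0 u1 u2" "mm 1 u1 u2" "mm 2 u1 u2" "mm 3 u1 u2"]
  show "(\<lambda>t. measure (K0 t) ({0..u1} \<times> {0..u2})) integrable_on {0..v}"
    unfolding K0_rect_step using hi by blast
  show "C0 u1 u2 v = integral {0..v} (\<lambda>t. measure (K0 t) ({0..u1} \<times> {0..u2}))"
    unfolding K0_rect_step C0_step by (rule integral_unique[OF hi, symmetric])
qed

lemma F13_K0: "F13 K0 t u = mm (grp t) u 1"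
  unfolding F13_def using K0_rect[of t u 1] by simp

lemma F23_K0: "F23 K0 t u = mm (grp t) 1 u"
  unfolding F23_def using K0_rect[of t 1 u] by simp

lemma K0_copulas: "cond_copulas K0 D0"
  unfolding cond_copulas_def
proof (intro AE_I2 impI conjI ballI)
  fix t :: real
  show "copula2 (D0 t)" unfolding D0_def by (rule Dcop_pm_copula2[OF grp_less])
  fix u1 u2 :: real
  show "measure (K0 t) ({0..u1} \<times> {0..u2}) = D0 t (F13 K0 t u1) (F23 K0 t u2)"
    unfolding K0_rect F13_K0 F23_K0 D0_def by (rule mm_Dcop[OF grp_less])
qed

lemma continuous_clamp[continuous_intros]: "continuous_on S f \<Longrightarrow> continuous_on S (\<lambda>x. clamp (f x))"
  unfolding clamp_def by (intro continuous_intros)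

lemma mm_cont1: "continuous_on UNIV (\<lambda>u. mm j u c)"
  unfolding mm_def by (intro continuous_intros)

lemma mm_cont2: "continuous_on UNIV (\<lambda>u. mm j c u)"
  unfolding mm_def by (intro continuous_intros)

lemma C0_copula3_c: "copula3_c C0"
  unfolding copula3_c_def
proof (intro conjI C0_copula3 exI[of _ K0] K0_kernel AE_I2 impI)
  fix t :: real
  show "continuous_on UNIV (F13 K0 t)" unfolding F13_K0 by (rule mm_cont1)
  show "continuous_on UNIV (F23 K0 t)" unfolding F23_K0 by (rule mm_cont2)
qed



lemma kernel_rect_meas:
  assumes "cond_kernel C K"
  shows "(\<lambda>t. ennreal (measure (K t) ({0..a} \<times> {0..b})) * indicator unit_I t) \<in> borel_measurable lborel"
proof -
  have K: "K \<in> restrict_space lborel unit_I \<rightarrow>\<^sub>M prob_algebra borel"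
    using assms unfolding cond_kernel_def by blast
  have "{0..a} \<times> {0..b} \<in> sets (borel \<Otimes>\<^sub>M (borel :: real measure))" by (intro pair_measureI) auto
  then have R: "{0..a} \<times> {0..b} \<in> sets (borel :: (real\<times>real) measure)" by (metis borel_prod)
  have "(\<lambda>t. measure (K t) ({0..a} \<times> {0..b})) \<in> borel_measurable (restrict_space lborel unit_I)"
    using measurable_compose[OF K measurable_measure_prob_algebra[OF R]] by simp
  then have "(\<lambda>t. ennreal (measure (K t) ({0..a} \<times> {0..b}))) \<in> borel_measurable (restrict_space lborel unit_I)"
    by measurable
  then show ?thesis
    by (subst (asm) borel_measurable_restrict_space_iff_ennreal) auto
qed

lemma kernel_rect_atMost:
  assumes "cond_kernel C K" "a \<in> unit_I" "b \<in> unit_I"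
  shows "emeasure (density lborel (\<lambda>t. ennreal (measure (K t) ({0..a} \<times> {0..b})) * indicator unit_I t)) {..x}
     = (if x < 0 then 0 else ennreal (C a b (min x 1)))"
proof -
  let ?f = "\<lambda>t. measure (K t) ({0..a} \<times> {0..b})"
  have e: "emeasure (density lborel (\<lambda>t. ennreal (?f t) * indicator unit_I t)) {..x}
      = (\<integral>\<^sup>+ t. ennreal (?f t) * indicator unit_I t * indicator {..x} t \<partial>lborel)"
    by (rule emeasure_density[OF kernel_rect_meas[OF assms(1)]]) simp
  show ?thesis
  proof (cases "x < 0")
    case True
    have "(\<integral>\<^sup>+ t. ennreal (?f t) * indicator unit_I t * indicator {..x} t \<partial>lborel) = (\<integral>\<^sup>+ (t::real). 0 \<partial>lborel)"
      by (intro nn_integral_cong) (use True in \<open>auto split: split_indicator\<close>)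
    then show ?thesis using e True by simp
  next
    case False
    let ?m = "min x 1"
    have m: "?m \<in> unit_I" using False by auto
    have hi: "(?f has_integral C a b ?m) {0..?m}"
      using assms(1) m assms(2,3) unfolding cond_kernel_def by (metis integrable_integral)
    have "(\<integral>\<^sup>+ t. ennreal (?f t) * indicator unit_I t * indicator {..x} t \<partial>lborel)
        = (\<integral>\<^sup>+ t. ennreal (?f t) * indicator {0..?m} t \<partial>lborel)"
      by (intro nn_integral_cong) (use False in \<open>auto split: split_indicator\<close>)
    also have "\<dots> = ennreal (C a b ?m)"
      by (rule nn_integral_has_integral_lebesgue'[OF _ hi]) auto
    finally show ?thesis using e False by simp
  qed
qed

lemma kernel_unique:
  assumes K1: "cond_kernel C K1" and K2: "cond_kernel C K2" and ab: "a \<in> unit_I" "b \<in> unit_I"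
  shows "AE t in lborel. t \<in> unit_I \<longrightarrow> measure (K1 t) ({0..a} \<times> {0..b}) = measure (K2 t) ({0..a} \<times> {0..b})"
proof -
  define g1 where "g1 = (\<lambda>t. ennreal (measure (K1 t) ({0..a} \<times> {0..b})) * indicator unit_I t)"
  define g2 where "g2 = (\<lambda>t. ennreal (measure (K2 t) ({0..a} \<times> {0..b})) * indicator unit_I t)"
  have m1: "g1 \<in> borel_measurable lborel" unfolding g1_def by (rule kernel_rect_meas[OF K1])
  have m2: "g2 \<in> borel_measurable lborel" unfolding g2_def by (rule kernel_rect_meas[OF K2])
  have at1: "emeasure (density lborel g1) {..x} = (if x < 0 then 0 else ennreal (C a b (min x 1)))" for x
    unfolding g1_def by (rule kernel_rect_atMost[OF K1 ab])
  have at2: "emeasure (density lborel g2) {..x} = (if x < 0 then 0 else ennreal (C a b (min x 1)))" for x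
    unfolding g2_def by (rule kernel_rect_atMost[OF K2 ab])
  have fin: "finite_borel_measure (density lborel g)"
    if at: "\<And>x. emeasure (density lborel g) {..x} = (if x < 0 then 0 else ennreal (C a b (min x 1)))"
      and gm: "g \<in> borel_measurable lborel" and g0: "\<And>t. t \<notin> unit_I \<Longrightarrow> g t = 0"
    for g :: "real \<Rightarrow> ennreal"
  proof -
    have "emeasure (density lborel g) (space (density lborel g)) = (\<integral>\<^sup>+ t. g t * indicator UNIV t \<partial>lborel)"
      using gm by (subst emeasure_density) auto
    also have "\<dots> = (\<integral>\<^sup>+ t. g t * indicator {..1} t \<partial>lborel)"
      by (intro nn_integral_cong) (use g0 in \<open>auto split: split_indicator\<close>)
    also have "\<dots> = emeasure (density lborel g) {..1}"
      using gm by (subst emeasure_density) auto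
    also have "\<dots> = ennreal (C a b 1)" using at[of 1] by simp
    finally have "emeasure (density lborel g) (space (density lborel g)) \<noteq> \<infinity>" by simp
    then have "finite_measure (density lborel g)" by (rule finite_measureI)
    then show ?thesis
      unfolding finite_borel_measure_def finite_borel_measure_axioms_def by simp
  qed
  have f1: "finite_borel_measure (density lborel g1)"
    by (rule fin[OF at1 m1]) (simp add: g1_def)
  have f2: "finite_borel_measure (density lborel g2)"
    by (rule fin[OF at2 m2]) (simp add: g2_def)
  have "cdf (density lborel g1) = cdf (density lborel g2)"
    unfolding cdf_def measure_def using at1 at2 by simp
  then have "density lborel g1 = density lborel g2"
    by (rule cdf_unique'[OF f1 f2])
  then have "AE t in lborel. g1 t = g2 t"
    by (rule sigma_finite_measure.density_unique[OF sigma_finite_lborel m1 m2])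
  then show ?thesis
    by (rule AE_mp) (auto simp: g1_def g2_def)
qed



definition Gs :: "real set" where "Gs = {0, 1/8, 2/8, 3/8, 4/8, 5/8, 6/8, 7/8, 1}"
definition Lv :: "real set" where "Lv = {1/4, 1/2, 3/4}"

lemma Gs_finite: "finite Gs" unfolding Gs_def by simp
lemma Gs_I: "a \<in> Gs \<Longrightarrow> a \<in> unit_I" unfolding Gs_def by auto
lemma Gs_1: "1 \<in> Gs" and Gs_half: "1/2 \<in> Gs" unfolding Gs_def by auto
lemma Lv_I: "x \<in> Lv \<Longrightarrow> x \<in> unit_I" unfolding Lv_def by auto

lemma lev1: "j < 4 \<Longrightarrow> x \<in> Lv \<Longrightarrow> \<exists>a\<in>Gs. mm j a 1 = x"
  using less4_cases[of j]
  by (auto simp: mm_F1 sum4 ca_def colsL_def Gs_def Lv_def clamp_def)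

lemma lev2: "j < 4 \<Longrightarrow> y \<in> Lv \<Longrightarrow> \<exists>b\<in>Gs. mm j 1 b = y"
  using less4_cases[of j]
  by (auto simp: mm_F2 sum4 rb_def rowsL_def Gs_def Lv_def clamp_def)

lemma half_Lv: "j < 4 \<Longrightarrow> mm j (1/2) 1 \<in> Lv \<and> mm j 1 (1/2) \<in> Lv"
  using less4_cases[of j]
  by (auto simp: mm_F1 mm_F2 sum4 ca_def colsL_def rb_def rowsL_def Lv_def clamp_def)



lemma step4_integral01: "integral {0..1} (step4 x0 x1 x2 x3) = (x0 + x1 + x2 + x3) / (4::real)"
  using step4_has_integral[of 1 x0 x1 x2 x3] by (simp add: integral_unique clamp_ge1)

lemma PC0: "partial_copula D0 x y = (Dcop (pm 0) x y + Dcop (pm 1) x y + Dcop (pm 2) x y + Dcop (pm 3) x y) / 4"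
proof -
  have "(\<lambda>r. D0 r x y) = step4 (Dcop (pm 0) x y) (Dcop (pm 1) x y) (Dcop (pm 2) x y) (Dcop (pm 3) x y)"
    unfolding D0_def by (intro ext) (rule comp_grp[where f="\<lambda>j. Dcop (pm j) x y"])
  then show ?thesis unfolding partial_copula_def by (simp add: step4_integral01)
qed

lemma psi0: "psi K0 D0 (1/2) (1/2) 1 = 3/16"
proof -
  let ?g = "\<lambda>j. partial_copula D0 (mm j (1/2) 1) (mm j 1 (1/2))"
  have "(\<lambda>t. partial_copula D0 (F13 K0 t (1/2)) (F23 K0 t (1/2))) = step4 (?g 0) (?g 1) (?g 2) (?g 3)"
    unfolding F13_K0 F23_K0 by (intro ext) (rule comp_grp[where f="?g"])
  then have "psi K0 D0 (1/2) (1/2) 1 = (?g 0 + ?g 1 + ?g 2 + ?g 3) / 4"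
    unfolding psi_def by (simp add: step4_integral01)
  also have "\<dots> = 3/16"
    unfolding PC0
    by (simp add: mm_F1 mm_F2 sum4 ca_def colsL_def rb_def rowsL_def Dcop_def pm_def permL_def clamp_def)
  finally show ?thesis .
qed

lemma C0v: "C0 (1/2) (1/2) 1 = 3/8"
  unfolding C0_def mm_def rs_def
  by (simp add: sum4 ca_def colsL_def rb_def rowsL_def pm_def permL_def clamp_def)



lemma AE_integral_eq:
  fixes f g :: "real \<Rightarrow> real"
  assumes "AE t in lborel. t \<in> S \<longrightarrow> f t = g t"
  shows "integral S f = integral S g"
proof -
  from AE_E[OF assms] obtain N where N: "{x \<in> space lborel. \<not> (x \<in> S \<longrightarrow> f x = g x)} \<subseteq> N"
    "emeasure lborel N = 0" "N \<in> sets lborel" .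
  then have "N \<in> null_sets lborel" by auto
  then have "negligible N" using negligible_iff_null_sets null_sets_completionI by blast
  then show ?thesis
    by (rule integral_spike) (use N in auto)
qed

lemma copula2_bounds:
  assumes "copula2 C" "x \<in> unit_I" "y \<in> unit_I"
  shows "0 \<le> C x y \<and> C x y \<le> 1"
proof -
  have b: "\<forall>u\<in>unit_I. C u 0 = 0 \<and> C 0 u = 0 \<and> C u 1 = u \<and> C 1 u = u"
    and inc: "\<And>a1 b1 a2 b2. a1 \<in> unit_I \<Longrightarrow> b1 \<in> unit_I \<Longrightarrow> a2 \<in> unit_I \<Longrightarrow> b2 \<in> unit_I \<Longrightarrow>
        a1 \<le> b1 \<Longrightarrow> a2 \<le> b2 \<Longrightarrow> C b1 b2 - C a1 b2 - C b1 a2 + C a1 a2 \<ge> 0"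
    using assms(1) unfolding copula2_def by blast+
  have "C x y - C 0 y - C x 0 + C 0 0 \<ge> 0" using inc[of 0 x 0 y] assms by auto
  moreover have "C 1 y - C x y - C 1 0 + C x 0 \<ge> 0" using inc[of x 1 0 y] assms by auto
  ultimately show ?thesis using b assms by auto
qed

lemma int_bound:
  fixes f :: "real \<Rightarrow> real"
  assumes "\<And>t. t \<in> {0..v} \<Longrightarrow> \<bar>f t\<bar> \<le> 1" "0 \<le> v"
  shows "\<bar>integral {0..v} f\<bar> \<le> v"
proof (cases "f integrable_on {0..v}")
  case True
  have fb: "f t \<le> 1" "-1 \<le> f t" if "t \<in> {0..v}" for t
    using assms(1)[OF that] by (auto simp: abs_le_iff)
  have "integral {0..v} f \<le> integral {0..v} (\<lambda>_. 1::real)"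
    by (intro integral_le True) (auto simp: fb)
  moreover have "integral {0..v} (\<lambda>_. -1::real) \<le> integral {0..v} f"
    by (intro integral_le True) (auto simp: fb)
  ultimately show ?thesis using assms(2) by auto
next
  case False
  then show ?thesis using assms(2) by (simp add: not_integrable_integral)
qed

lemma kernel_prob: "cond_kernel C K \<Longrightarrow> t \<in> unit_I \<Longrightarrow> prob_space (K t)"
  unfolding cond_kernel_def
  using measurable_space[of K "restrict_space lborel unit_I" "prob_algebra borel" t]
  by (auto simp: space_prob_algebra space_restrict_space)

lemma F13_bound: "cond_kernel C K \<Longrightarrow> t \<in> unit_I \<Longrightarrow> F13 K t u \<in> unit_I"
  unfolding F13_def using kernel_prob[of C K t] prob_space.prob_le_1 by auto

lemma F23_bound: "cond_kernel C K \<Longrightarrow> t \<in> unit_I \<Longrightarrow> F23 K t u \<in> unit_I"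
  unfolding F23_def using kernel_prob[of C K t] prob_space.prob_le_1 by auto

lemma PC_bound:
  assumes D: "cond_copulas K D" and xy: "x \<in> unit_I" "y \<in> unit_I"
  shows "\<bar>partial_copula D x y\<bar> \<le> 1"
proof -
  have "AE t in lborel. t \<in> unit_I \<longrightarrow> D t x y = clamp (D t x y)"
    using D unfolding cond_copulas_def
    by (rule AE_mp) (auto intro!: clamp_id[symmetric] dest: copula2_bounds[OF _ xy])
  then have "partial_copula D x y = integral {0..1} (\<lambda>t. clamp (D t x y))"
    unfolding partial_copula_def by (rule AE_integral_eq)
  also have "\<bar>\<dots>\<bar> \<le> 1"
    by (rule int_bound[where v=1, simplified]) (auto simp: abs_le_iff)
  finally show ?thesis .
qed

lemma psi_bound:
  assumes K: "cond_kernel C K" and D: "cond_copulas K D" and v: "v \<in> unit_I"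
  shows "\<bar>psi K D u1 u2 v\<bar> \<le> 1"
proof -
  have "\<bar>psi K D u1 u2 v\<bar> \<le> v"
    unfolding psi_def
  proof (rule int_bound)
    fix t assume "t \<in> {0..v}"
    then have t: "t \<in> unit_I" using v by auto
    show "\<bar>partial_copula D (F13 K t u1) (F23 K t u2)\<bar> \<le> 1"
      by (rule PC_bound[OF D F13_bound[OF K t] F23_bound[OF K t]])
  qed (use v in auto)
  then show ?thesis using v by auto
qed

lemma mm_bound: "0 \<le> mm j u1 u2 \<and> mm j u1 u2 \<le> 1"
proof -
  have "mm j u1 u2 \<le> (\<Sum>k<(4::nat). 1/4)"
    unfolding mm_def by (intro sum_mono) (auto intro!: mult_le_one)
  moreover have "0 \<le> mm j u1 u2" unfolding mm_def by (intro sum_nonneg) auto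
  ultimately show ?thesis by simp
qed

lemma C0_bound: "\<bar>C0 u1 u2 v\<bar> \<le> 1"
proof -
  have "C0 u1 u2 v \<le> (\<Sum>j<(4::nat). 1/4)"
    unfolding C0_def using mm_bound by (intro sum_mono) (auto intro!: mult_le_one simp: divide_le_eq)
  moreover have "0 \<le> C0 u1 u2 v" unfolding C0_def using mm_bound by (intro sum_nonneg) auto
  ultimately show ?thesis by simp
qed

theorem theorem5p6:
  shows "\<exists>C. copula3_c C \<and>
           (\<exists>K D. cond_kernel C K \<and> cond_copulas K D) \<and>
           (\<forall>K D. cond_kernel C K \<longrightarrow> cond_copulas K D \<longrightarrow> d_inf C (psi K D) \<ge> 3/16)"
proof (intro exI[of _ C0] conjI C0_copula3_c allI impI)
  show "\<exists>K D. cond_kernel C0 K \<and> cond_copulas K D" using K0_kernel K0_copulas by blast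
  fix K D assume K: "cond_kernel C0 K" and D: "cond_copulas K D"
  have H1: "AE t in lborel. \<forall>a\<in>Gs. \<forall>b\<in>Gs. t \<in> unit_I \<longrightarrow>
      measure (K t) ({0..a} \<times> {0..b}) = measure (K0 t) ({0..a} \<times> {0..b})"
    by (intro AE_finite_allI Gs_finite kernel_unique[OF K K0_kernel] Gs_I)
  have H2: "AE t in lborel. t \<in> unit_I \<longrightarrow> copula2 (D t) \<and>
        (\<forall>u1\<in>unit_I. \<forall>u2\<in>unit_I.
           measure (K t) ({0..u1} \<times> {0..u2}) = D t (F13 K t u1) (F23 K t u2))"
    using D unfolding cond_copulas_def .
  have H3: "AE t in lborel. t \<in> unit_I \<longrightarrow> (\<forall>x\<in>Lv. \<forall>y\<in>Lv. D t x y = D0 t x y)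
      \<and> F13 K t (1/2) = F13 K0 t (1/2) \<and> F23 K t (1/2) = F23 K0 t (1/2)"
    using H1 H2
  proof eventually_elim
    case (elim t)
    show ?case
    proof (intro impI conjI ballI)
      assume t: "t \<in> unit_I"
      define j where "j = grp t"
      have j: "j < 4" unfolding j_def by (rule grp_less)
      have E: "measure (K t) ({0..a} \<times> {0..b}) = mm j a b" if "a \<in> Gs" "b \<in> Gs" for a b
        using elim(1) that t K0_rect[of t a b] unfolding j_def by auto
      have DD: "measure (K t) ({0..u1} \<times> {0..u2}) = D t (F13 K t u1) (F23 K t u2)"
        if "u1 \<in> unit_I" "u2 \<in> unit_I" for u1 u2
        using elim(2) t that by auto
      show "F13 K t (1/2) = F13 K0 t (1/2)"
        unfolding F13_def using E[OF Gs_half Gs_1] K0_rect[of t "1/2" 1] j_def by simp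
      show "F23 K t (1/2) = F23 K0 t (1/2)"
        unfolding F23_def using E[OF Gs_1 Gs_half] K0_rect[of t 1 "1/2"] j_def by simp
      fix x y assume x: "x \<in> Lv" and y: "y \<in> Lv"
      obtain a where a: "a \<in> Gs" "mm j a 1 = x" using lev1[OF j x] by blast
      obtain b where b: "b \<in> Gs" "mm j 1 b = y" using lev2[OF j y] by blast
      have Fa: "F13 K t a = x" unfolding F13_def using E[OF a(1) Gs_1] a(2) by simp
      have Fb: "F23 K t b = y" unfolding F23_def using E[OF Gs_1 b(1)] b(2) by simp
      have "D t x y = measure (K t) ({0..a} \<times> {0..b})"
        using DD[OF Gs_I[OF a(1)] Gs_I[OF b(1)]] Fa Fb by simp
      also have "\<dots> = mm j a b" by (rule E[OF a(1) b(1)])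
      also have "\<dots> = Dcop (pm j) x y" using mm_Dcop[OF j, of a b] a b by simp
      also have "\<dots> = D0 t x y" unfolding D0_def j_def ..
      finally show "D t x y = D0 t x y" .
    qed
  qed
  have PC: "partial_copula D x y = partial_copula D0 x y" if "x \<in> Lv" "y \<in> Lv" for x y
    unfolding partial_copula_def
    by (rule AE_integral_eq, rule AE_mp[OF H3]) (use that in auto)
  have "psi K D (1/2) (1/2) 1 = psi K0 D0 (1/2) (1/2) 1"
    unfolding psi_def
  proof (rule AE_integral_eq, rule AE_mp[OF H3], intro AE_I2 impI)
    fix t :: real
    assume h: "t \<in> unit_I \<longrightarrow> (\<forall>x\<in>Lv. \<forall>y\<in>Lv. D t x y = D0 t x y)
      \<and> F13 K t (1/2) = F13 K0 t (1/2) \<and> F23 K t (1/2) = F23 K0 t (1/2)" and t: "t \<in> {0..1}"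
    have l: "F13 K0 t (1/2) \<in> Lv" "F23 K0 t (1/2) \<in> Lv"
      unfolding F13_K0 F23_K0 using half_Lv[OF grp_less] by auto
    show "partial_copula D (F13 K t (1/2)) (F23 K t (1/2)) = partial_copula D0 (F13 K0 t (1/2)) (F23 K0 t (1/2))"
      using h t PC[OF l] by auto
  qed
  then have psiv: "psi K D (1/2) (1/2) 1 = 3/16" using psi0 by simp
  let ?f = "\<lambda>x. \<bar>C0 (fst x) (fst (snd x)) (snd (snd x)) - psi K D (fst x) (fst (snd x)) (snd (snd x))\<bar>"
  have bdd: "bdd_above (?f ` (unit_I \<times> unit_I \<times> unit_I))"
  proof (rule bdd_aboveI2)
    fix x :: "real \<times> real \<times> real" assume "x \<in> unit_I \<times> unit_I \<times> unit_I"
    then have "snd (snd x) \<in> unit_I" by auto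
    then have "\<bar>psi K D (fst x) (fst (snd x)) (snd (snd x))\<bar> \<le> 1" by (rule psi_bound[OF K D])
    moreover have "\<bar>C0 (fst x) (fst (snd x)) (snd (snd x))\<bar> \<le> 1" by (rule C0_bound)
    ultimately show "?f x \<le> 2" by linarith
  qed
  have "3/16 \<le> ?f (1/2, 1/2, 1)" using psiv C0v by simp
  also have "\<dots> \<le> d_inf C0 (psi K D)"
    unfolding d_inf_def by (rule cSUP_upper[OF _ bdd]) auto
  finally show "d_inf C0 (psi K D) \<ge> 3/16" .
qed

end
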